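(* Let $m\geqslant 8$ with $m\equiv 0\pmod 4$, $d=(m-2)/2$, and $f(x)=x^{m-1}$. For every $\alpha\in\mathbb F_{2^n}^*$, the polynomial $(L_\alpha f)'$ has exactly $(d-1)/2$ distinct double roots in $\overline{\mathbb F}_2$, namely $\tau_1,\dots,\tau_{(d-1)/2}$ given by $\tau_i=\frac{\alpha^2}{1+\theta_i}+\frac{\alpha^2}{1+\theta_i^2}$, where $\theta_1,\dots,\theta_{(d-1)/2}$ are $(d-1)/2$ distinct $d$-th roots of unity in $\overline{\mathbb F}_2\setminus\{1\}$ chosen such that $\theta_i\theta_j\neq 1$ for $i\neq j$.
   Context: $D_\alpha f(x)=f(x+\alpha)+f(x)$. For $m\equiv 0\pmod 4$, $d=(m-2)/2$ and $f$ of degree at most $m$, $L_\alpha f$ is the unique polynomial of degree at most $d$ such that $(L_\alpha f)(x(x+\alpha))=D_\alpha f(x)$. *)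

theory Defs
  imports "HOL-Computational_Algebra.Polynomial"
begin

definition Dpoly :: "'a::comm_ring_1 poly \<Rightarrow> 'a \<Rightarrow> 'a poly" where
  "Dpoly f \<alpha> = pcompose f [:\<alpha>, 1:] + f"

definition Lpoly :: "'a::comm_ring_1 poly \<Rightarrow> 'a \<Rightarrow> nat \<Rightarrow> 'a poly" where
  "Lpoly f \<alpha> d = (THE g. degree g \<le> d \<and> pcompose g [:0, \<alpha>, 1:] = Dpoly f \<alpha>)"

end

theory Submission
  imports Defs
begin

lemma c2_add: assumes "(2::'b::comm_ring_1) = 0" shows "(x::'b) + x = 0"
  by (metis assms mult_2 mult_zero_left)

lemma c2_neg: assumes "(2::'b::comm_ring_1) = 0" shows "- (x::'b) = x"
  using c2_add[OF assms, of x] by (simp add: add_eq_0_iff)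

lemma c2_poly: assumes "(2::'b::comm_ring_1) = 0" shows "(2::'b poly) = 0"
proof -
  have "(2::'b poly) = of_nat 2" by simp
  also have "\<dots> = [:of_nat 2:]" by (rule of_nat_poly)
  also have "\<dots> = 0" using assms by simp
  finally show ?thesis .
qed

fun S :: "'a::comm_ring_1 \<Rightarrow> nat \<Rightarrow> 'a poly" where
  "S a 0 = 0"
| "S a (Suc 0) = [:a:]"
| "S a (Suc (Suc k)) = smult a (S a (Suc k)) + [:0,1:] * S a k"

lemma S_degree: "degree (S a k) \<le> k div 2"
proof (induction a k rule: S.induct)
  case (3 a k)
  have "degree (smult a (S a (Suc k))) \<le> Suc (Suc k) div 2"
    using 3(1) degree_smult_le[of a "S a (Suc k)"] by linarith
  moreover have "degree ([:0,1:] * S a k) \<le> Suc (Suc k) div 2"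
    using 3(2) degree_mult_le[of "[:0,1::'a:]" "S a k"] by simp
  ultimately show ?case by (simp add: degree_add_le)
qed auto

lemma c2_ident:
  assumes "(2::'b::comm_ring_1) = 0"
  shows "(u+v)*(u*u^k + v*v^k) + u*v*(u^k+v^k) = u*(u*u^k) + v*(v*(v::'b)^k)"
proof -
  have "(u+v)*(u*u^k + v*v^k) + u*v*(u^k+v^k) = u*(u*u^k) + v*(v*v^k) + 2*(u*v*u^k + u*v*v^k)"
    by (simp add: algebra_simps)
  thus ?thesis using assms by simp
qed

lemma S_comp:
  fixes a :: "'a::comm_ring_1"
  assumes "(2::'a::comm_ring_1) = 0"
  shows "pcompose (S a k) [:0,a,1:] = [:a,1:]^k + [:0,1:]^k"
proof (induction a k rule: S.induct)
  case (1 a)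
  have "(1::'a poly) + 1 = 0" using c2_poly[OF assms] by (simp add: one_add_one)
  then show ?case by simp
next
  case (2 a)
  have "[:a,1::'a:] + [:0,1:] = [:a, 2:]" by simp
  then show ?case using assms by (simp add: pcompose_pCons)
next
  case (3 a k)
  have pv: "pcompose [:0,1::'a:] [:0,a,1:] = [:0,a,1:]" by (simp add: pcompose_pCons)
  have e1: "pcompose (S a (Suc (Suc k))) [:0,a,1:]
      = smult a ([:a,1:]^Suc k + [:0,1:]^Suc k) + [:0,a,1:] * ([:a,1:]^k + [:0,1:]^k)"
    by (simp only: S.simps pcompose_add pcompose_smult pcompose_mult pv 3)
  have uv: "[:0,a,1:] = [:a,1:] * [:0,1::'a:]" by simp
  have sa: "smult a p = ([:a,1:] + [:0,1::'a:]) * p" for p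
  proof -
    have "[:a,1:] + [:0,1::'a:] = [:a:]" using assms by simp
    thus ?thesis by simp
  qed
  show ?case unfolding e1 unfolding sa uv power_Suc
    by (rule c2_ident[OF c2_poly[OF assms]])
qed

lemma monom_X: "monom (1::'a::comm_semiring_1) n = [:0,1:]^n"
  by (induct n) (simp_all add: monom_Suc monom_0 one_pCons)

lemma pcompose_Xpow: "pcompose ([:0,1:]^n) r = (r::'a::comm_semiring_1 poly)^n"
  by (induct n) (simp_all add: pcompose_mult pcompose_1 pcompose_pCons)

lemma pcompose_pow: "pcompose (p ^ n) r = (pcompose p r :: 'a::comm_semiring_1 poly) ^ n"
  by (induct n) (simp_all add: pcompose_mult pcompose_1)

lemma c2_eq: assumes "(2::'b::comm_ring_1) = 0" "(a::'b) + b = 0" shows "a = b"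
proof -
  have "a = - b" using assms(2) by (simp add: eq_neg_iff_add_eq_0)
  thus ?thesis using c2_neg[OF assms(1)] by simp
qed

lemma aux_field: "(c::'a::field) \<noteq> 0 \<Longrightarrow> a / c * (a + a / c) = a\<^sup>2/c + a\<^sup>2/c\<^sup>2"
  by (simp add: field_simps power2_eq_square)

theorem lemma2p5:
  fixes \<alpha> :: "'a::alg_closed_field"
    and m n :: nat
    and \<theta> :: "nat \<Rightarrow> 'a"
  assumes char2: "CHAR('a) = 2"
    and m8: "m \<ge> 8" and m4: "m mod 4 = 0"
    and n1: "n \<ge> 1"
    and alpha_F: "\<alpha> ^ (2 ^ n) = \<alpha>" and alpha_nz: "\<alpha> \<noteq> 0"
    and theta_root: "\<And>i. i \<in> {1..((m - 2) div 2 - 1) div 2} \<Longrightarrow> \<theta> i ^ ((m - 2) div 2) = 1"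
    and theta_ne1: "\<And>i. i \<in> {1..((m - 2) div 2 - 1) div 2} \<Longrightarrow> \<theta> i \<noteq> 1"
    and theta_inj: "inj_on \<theta> {1..((m - 2) div 2 - 1) div 2}"
    and theta_inv: "\<And>i j. i \<in> {1..((m - 2) div 2 - 1) div 2} \<Longrightarrow> j \<in> {1..((m - 2) div 2 - 1) div 2}
                      \<Longrightarrow> i \<noteq> j \<Longrightarrow> \<theta> i * \<theta> j \<noteq> 1"
  shows "{x. order x (pderiv (Lpoly (monom 1 (m - 1)) \<alpha> ((m - 2) div 2))) = 2}
           = (\<lambda>i. \<alpha>\<^sup>2 / (1 + \<theta> i) + \<alpha>\<^sup>2 / (1 + (\<theta> i)\<^sup>2)) ` {1..((m - 2) div 2 - 1) div 2}
         \<and> card {x. order x (pderiv (Lpoly (monom 1 (m - 1)) \<alpha> ((m - 2) div 2))) = 2}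
           = ((m - 2) div 2 - 1) div 2"
proof -
  define d where "d = (m - 2) div 2"
  define t where "t = m div 4"
  have m_eq: "m = 4*t" using m4 t_def by auto
  have t2: "t \<ge> 2" using m8 m_eq by simp
  have d_eq: "d = Suc (2*(t-1))" using m_eq t2 unfolding d_def by simp
  have m1: "m - 1 = Suc (2*d)" using m_eq t2 d_eq by simp
  have md: "(m - 1) div 2 = d" using m1 by simp
  define k where "k = (d - 1) div 2"
  have dk: "d div 2 = k" using d_eq k_def by simp
  have k_eq: "((m - 2) div 2 - 1) div 2 = k" by (simp add: d_def k_def)
  define I where "I = {1..k}"
  have tI: "\<And>i. i \<in> I \<Longrightarrow> \<theta> i ^ d = 1" "\<And>i. i \<in> I \<Longrightarrow> \<theta> i \<noteq> 1" "inj_on \<theta> I"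
    "\<And>i j. i \<in> I \<Longrightarrow> j \<in> I \<Longrightarrow> i \<noteq> j \<Longrightarrow> \<theta> i * \<theta> j \<noteq> 1"
    using theta_root theta_ne1 theta_inj theta_inv unfolding I_def k_eq d_def by auto
  have two: "(2::'a) = 0" using of_nat_CHAR[where 'a='a] char2 by simp
  have two_p: "(2::'a poly) = 0" by (rule c2_poly[OF two])
  define q where "q = [:0, \<alpha>, 1::'a:]"
  define u where "u = [:\<alpha>, 1::'a:]"
  define v where "v = [:0, 1::'a:]"
  define H where "H = S \<alpha> d"
  define L where "L = Lpoly (monom 1 (m - 1)) \<alpha> d"
  have Dform: "Dpoly (monom 1 (m - 1)) \<alpha> = u^(m-1) + v^(m-1)"
    unfolding Dpoly_def monom_X pcompose_Xpow u_def v_def by (simp add: add.commute)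
  have Scomp: "pcompose (S \<alpha> j) q = u^j + v^j" for j
    unfolding q_def u_def v_def by (rule S_comp[OF two])
  have degS: "degree (S \<alpha> (m - 1)) \<le> d" using S_degree[of \<alpha> "m - 1"] md by simp
  have degq: "degree q > 0" by (simp add: q_def)
  have Lis: "L = S \<alpha> (m - 1)"
    unfolding L_def Lpoly_def
  proof (rule the_equality)
    show "degree (S \<alpha> (m - 1)) \<le> d \<and> pcompose (S \<alpha> (m - 1)) [:0, \<alpha>, 1:] = Dpoly (monom 1 (m - 1)) \<alpha>"
      using degS Scomp Dform by (simp add: q_def)
  next
    fix g assume "degree g \<le> d \<and> pcompose g [:0, \<alpha>, 1:] = Dpoly (monom 1 (m - 1)) \<alpha>"
    then have "pcompose (g - S \<alpha> (m - 1)) q = 0"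
      using Scomp Dform by (simp add: pcompose_diff q_def)
    then have "g - S \<alpha> (m - 1) = 0" using pcompose_eq_0 degq by blast
    thus "g = S \<alpha> (m - 1)" by simp
  qed
  have LD: "pcompose L q = u^(m-1) + v^(m-1)" using Lis Scomp by simp
  define P where "P = pderiv L"
  have pq: "pderiv q = [:\<alpha>:]" using two by (simp add: q_def pderiv_pCons)
  have ofm1: "(of_nat (Suc (2*d)) :: 'a) = 1" using two by simp
  have ofd: "(of_nat (Suc (2*(t-1))) :: 'a) = 1" using two by simp
  have pu: "pderiv u = 1" "pderiv v = 1" by (simp_all add: u_def v_def pderiv_pCons)
  have sq: "(A + B)^2 = A^2 + (B::'a poly)^2" for A B
  proof -
    have "(A + B)^2 = A^2 + B^2 + 2 * (A*B)" by (simp add: power2_eq_square algebra_simps)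
    thus ?thesis using two_p by simp
  qed
  have pD: "pderiv (u^(m-1) + v^(m-1)) = (u^d + v^d)^2"
    unfolding m1 pderiv_add pderiv_power_Suc ofm1 pu sq by (simp add: power_mult mult.commute)
  have "pcompose P q * [:\<alpha>:] = pcompose (H^2) q"
    using pderiv_pcompose[of L q] unfolding LD pD pq P_def pcompose_pow H_def Scomp by simp
  then have "pcompose (smult \<alpha> P - H^2) q = 0" by (simp add: pcompose_diff pcompose_smult mult.commute)
  then have "smult \<alpha> P - H^2 = 0" using pcompose_eq_0 degq by blast
  then have "smult (inverse \<alpha>) (smult \<alpha> P) = smult (inverse \<alpha>) (H * H)"
    by (simp add: power2_eq_square)
  then have Pf: "P = smult (inverse \<alpha>) (H * H)" using alpha_nz by simp
  have Hx: "poly H (poly q x) = (\<alpha> + x)^d + x^d" for x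
    using arg_cong[OF Scomp[of d], of "\<lambda>p. poly p x"] by (simp add: poly_pcompose H_def u_def v_def)
  have Hnz: "H \<noteq> 0"
  proof
    assume "H = 0"
    then have "(\<alpha> + 0)^d + 0^d = 0" using Hx[of 0] by simp
    then show False using alpha_nz d_eq by simp
  qed
  have surjq: "\<exists>x. poly q x = y" for y
  proof -
    obtain x where "poly [:-y, \<alpha>, 1:] x = 0" using alg_closed_imp_poly_has_root[of "[:-y, \<alpha>, 1:]"] by auto
    then show ?thesis by (intro exI[of _ x]) (simp add: q_def algebra_simps)
  qed
  have pH: "pderiv (u^d + v^d) = u^(d-1) + v^(d-1)"
    using d_eq unfolding pderiv_add by (simp only: pderiv_power_Suc ofd pu) simp
  have noDouble: "\<not> (poly H y = 0 \<and> poly (pderiv H) y = 0)" for y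
  proof
    assume A: "poly H y = 0 \<and> poly (pderiv H) y = 0"
    obtain x where xq: "poly q x = y" using surjq by blast
    have h1: "(\<alpha> + x)^d = x^d" using A Hx[of x] xq c2_eq[OF two] by simp
    have "pderiv (pcompose H q) = pcompose (pderiv H) q * [:\<alpha>:]"
      using pderiv_pcompose[of H q] pq by simp
    then have "poly (pderiv (u^d + v^d)) x = 0"
      using A xq by (simp add: H_def Scomp poly_pcompose)
    then have h2: "(\<alpha> + x)^(d-1) = x^(d-1)" using pH c2_eq[OF two] by (simp add: u_def v_def)
    have dd: "d = Suc (d - 1)" using d_eq by simp
    have "x^d = (\<alpha> + x) * x^(d-1)" using h1 h2 dd by (metis power_Suc)
    also have "\<dots> = \<alpha> * x^(d-1) + x^d" using dd by (metis distrib_right power_Suc)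
    finally have "\<alpha> * x^(d-1) = 0" by simp
    then have "x = 0" using alpha_nz by simp
    then show False using h1 alpha_nz d_eq by simp
  qed
  have ord1: "order y H \<le> 1" for y
  proof (rule ccontr)
    assume "\<not> order y H \<le> 1"
    then have "[:-y, 1:]^2 dvd H" by (simp add: order_divides)
    then obtain r where r: "H = [:-y, 1:]^2 * r" by (elim dvdE)
    have "poly H y = 0 \<and> poly (pderiv H) y = 0"
      unfolding r power2_eq_square pderiv_mult poly_add poly_mult by simp
    then show False using noDouble by blast
  qed
  have ordP: "order y P = 2 * order y H" for y
    using Hnz alpha_nz by (simp add: Pf order_smult order_mult)
  have set1: "{y. order y P = 2} = {y. poly H y = 0}"
  proof -
    have "order y P = 2 \<longleftrightarrow> poly H y = 0" for y
      using ordP[of y] ord1[of y] order_root[of H y] Hnz by auto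
    thus ?thesis by blast
  qed
  define \<tau> where "\<tau> = (\<lambda>i. \<alpha>\<^sup>2 / (1 + \<theta> i) + \<alpha>\<^sup>2 / (1 + (\<theta> i)\<^sup>2))"
  define xi where "xi = (\<lambda>i. \<alpha> / (1 + \<theta> i))"
  have nz: "1 + \<theta> i \<noteq> 0" if "i \<in> I" for i
  proof
    assume "1 + \<theta> i = 0"
    then have "1 = \<theta> i" using c2_eq[OF two] by blast
    then show False using tI(2)[OF that] by simp
  qed
  have sq1: "1 + z^2 = (1 + z)^2" for z :: 'a
  proof -
    have "(1 + z)^2 = 1 + z^2 + 2 * z" by (simp add: power2_eq_square algebra_simps)
    thus ?thesis using two by simp
  qed
  have qx: "poly q (xi i) = \<tau> i" if "i \<in> I" for i
  proof -
    have "poly q (xi i) = xi i * (\<alpha> + xi i)" by (simp add: q_def algebra_simps)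
    also have "\<dots> = \<alpha>\<^sup>2 / (1 + \<theta> i) + \<alpha>\<^sup>2 / (1 + \<theta> i)\<^sup>2"
      using nz[OF that] unfolding xi_def by (rule aux_field)
    also have "\<dots> = \<tau> i" unfolding \<tau>_def sq1 ..
    finally show ?thesis .
  qed
  have ax: "\<alpha> + xi i = \<theta> i * xi i" if "i \<in> I" for i
  proof -
    have "\<alpha> + xi i = \<alpha> * (2 + \<theta> i) / (1 + \<theta> i)"
      using nz[OF that] unfolding xi_def by (simp add: field_simps)
    also have "\<dots> = \<theta> i * xi i" using two unfolding xi_def by simp
    finally show ?thesis .
  qed
  have troot: "poly H (\<tau> i) = 0" if "i \<in> I" for i
  proof -
    have "poly H (\<tau> i) = (\<theta> i * xi i)^d + (xi i)^d"
      using Hx[of "xi i"] qx[OF that] ax[OF that] by simp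
    also have "\<dots> = 2 * (xi i)^d" using tI(1)[OF that] by (simp add: power_mult_distrib)
    finally show ?thesis using two by simp
  qed
  have tinj: "inj_on \<tau> I"
  proof (rule inj_onI)
    fix i j assume i: "i \<in> I" and j: "j \<in> I" and e: "\<tau> i = \<tau> j"
    have "(xi i - xi j) * (xi i + xi j + \<alpha>) = poly q (xi i) - poly q (xi j)"
      by (simp add: q_def algebra_simps)
    also have "\<dots> = 0" using qx[OF i] qx[OF j] e by simp
    finally have "xi i = xi j \<or> xi i + xi j + \<alpha> = 0" by simp
    then show "i = j"
    proof
      assume "xi i = xi j"
      then have "\<theta> i = \<theta> j" using nz[OF i] nz[OF j] alpha_nz unfolding xi_def by (simp add: field_simps)
      then show ?thesis using tI(3) i j by (meson inj_onD)
    next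
      assume "xi i + xi j + \<alpha> = 0"
      then have "xi j = \<alpha> + xi i" using c2_eq[OF two, of "xi j" "\<alpha> + xi i"] by (simp add: algebra_simps)
      also have "\<dots> = \<theta> i * xi i" by (rule ax[OF i])
      finally have "\<alpha> / (1 + \<theta> j) = \<theta> i * (\<alpha> / (1 + \<theta> i))" unfolding xi_def .
      then have "1 + \<theta> i = \<theta> i * (1 + \<theta> j)" using nz[OF i] nz[OF j] alpha_nz by (simp add: field_simps)
      then have "\<theta> i * \<theta> j = 1" by (simp add: algebra_simps)
      then show ?thesis using tI(4) i j by blast
    qed
  qed
  have fin: "finite {y. poly H y = 0}" using poly_roots_finite[OF Hnz] .
  have cardR: "card {y. poly H y = 0} \<le> card (\<tau> ` I)"
  proof -
    have "card {y. poly H y = 0} \<le> degree H" using card_poly_roots_bound[OF Hnz] .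
    also have "\<dots> \<le> k" using S_degree[of \<alpha> d] dk by (simp add: H_def)
    also have "\<dots> = card (\<tau> ` I)" using card_image[OF tinj] by (simp add: I_def)
    finally show ?thesis .
  qed
  have R: "{y. poly H y = 0} = \<tau> ` I"
    using card_seteq[OF fin _ cardR] troot by blast
  have cI: "card (\<tau> ` I) = k" using card_image[OF tinj] by (simp add: I_def)
  show ?thesis
    unfolding k_eq d_def[symmetric] L_def[symmetric] P_def[symmetric] set1 R
    using cI by (simp add: \<tau>_def I_def k_def)
qed

end
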